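(* Let $d\ge1$, $\sigma^2>0$, $\nu>0$, $\alpha>0$, $\beta>0$, $\boldsymbol\lambda\in\mathbb{R}^d$ and $\boldsymbol\Lambda$ a $d\times d$ symmetric positive-definite matrix. For $\rho>0$ let $C_s(\mathbf{x};\rho)=\sigma^2\exp\{-\|\mathbf{x}\|^2/\rho^2\}$ and $C(\mathbf{h},u;\rho):=E_{\mathbf{v}}[C_s(\mathbf{h}-\mathbf{v}u;\rho)]$ with $\mathbf{v}\sim\mathcal{N}_d(\boldsymbol\lambda,\rho^2\boldsymbol\Lambda/2)$. Consider the hierarchy $\rho^2\mid\phi^2\sim\mathrm{Ga}(\nu,1/(4\phi^2))$ and $\phi^2\sim\mathrm{IG}(\alpha,\beta^2/4)$, and define $K(\mathbf{h},u):=E_{(\rho^2,\phi^2)}[C(\mathbf{h},u;\rho)]$. Then for all $(\mathbf{h},u)\in\mathbb{R}^d\times\mathbb{R}$, $$K(\mathbf{h},u)=\sigma^2\,|\mathbf{I}_d+u^2\boldsymbol\Lambda|^{-1/2}\,\mathcal{CH}(h_u;\nu,\alpha,\beta),$$ where $h_u:=\{(\mathbf{h}-u\boldsymbol\lambda)^\top(u^2\boldsymbol\Lambda+\mathbf{I}_d)^{-1}(\mathbf{h}-u\boldsymbol\lambda)\}^{1/2}$.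
   Context: $X\sim\mathrm{Ga}(a,b)$ means density $\frac{b^a}{\Gamma(a)}x^{a-1}e^{-bx}$, $x>0$; $X\sim\mathrm{IG}(a,b)$ means density $\frac{b^a}{\Gamma(a)}x^{-a-1}e^{-b/x}$, $x>0$. The confluent hypergeometric (CH) correlation is $\mathcal{CH}(r;\nu,\alpha,\beta)=\frac{\Gamma(\nu+\alpha)}{\Gamma(\nu)}\,\mathcal{U}(\alpha,1-\nu,r^2/\beta^2)$, where $\mathcal{U}(a,b,x)=\frac{1}{\Gamma(a)}\int_0^\infty t^{a-1}(1+t)^{b-a-1}e^{-xt}\,\mathrm{d}t$ is the confluent hypergeometric function of the second kind (for $r=0$ the value is $1$). $|\cdot|$ of a matrix is its determinant. *)

theory Defs
  imports "HOL-Analysis.Analysis"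
begin

text \<open>Densities. Gamma Ga(a,b) with rate b; inverse gamma IG(a,b).\<close>
definition gamma_dens :: "real \<Rightarrow> real \<Rightarrow> real \<Rightarrow> real" where
  "gamma_dens a b x = (if x > 0 then b powr a / Gamma a * x powr (a - 1) * exp (- b * x) else 0)"

definition invgamma_dens :: "real \<Rightarrow> real \<Rightarrow> real \<Rightarrow> real" where
  "invgamma_dens a b x = (if x > 0 then b powr a / Gamma a * x powr (- a - 1) * exp (- b / x) else 0)"

text \<open>Density of the d-variate normal N_d(m, S) (S symmetric positive definite).\<close>
definition normal_dens :: "real^'n \<Rightarrow> real^'n^'n \<Rightarrow> real^'n \<Rightarrow> real" where
  "normal_dens m S x =
     exp (- (1/2) * ((x - m) \<bullet> (matrix_inv S *v (x - m))))
     / sqrt ((2 * pi) ^ CARD('n) * det S)"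

text \<open>Confluent hypergeometric function of the second kind and the CH correlation.\<close>
definition hypU :: "real \<Rightarrow> real \<Rightarrow> real \<Rightarrow> real" where
  "hypU a b x = (1 / Gamma a) *
     (LINT t:{0<..}|lborel. t powr (a - 1) * (1 + t) powr (b - a - 1) * exp (- x * t))"

definition CH :: "real \<Rightarrow> real \<Rightarrow> real \<Rightarrow> real \<Rightarrow> real" where
  "CH r \<nu> \<alpha> \<beta> = (if r = 0 then 1
     else Gamma (\<nu> + \<alpha>) / Gamma \<nu> * hypU \<alpha> (1 - \<nu>) (r\<^sup>2 / \<beta>\<^sup>2))"

text \<open>Squared-exponential covariance C_s(x; rho).\<close>
definition Cs :: "real \<Rightarrow> real^'n \<Rightarrow> real \<Rightarrow> real" where
  "Cs \<sigma>2 x \<rho> = \<sigma>2 * exp (- (norm x)\<^sup>2 / \<rho>\<^sup>2)"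

text \<open>C(h,u;rho) = E_v[C_s(h - v u; rho)], v ~ N_d(lambda, rho^2 Lambda / 2).\<close>
definition Clag :: "real \<Rightarrow> real^'n \<Rightarrow> real^'n^'n \<Rightarrow> real^'n \<Rightarrow> real \<Rightarrow> real \<Rightarrow> real" where
  "Clag \<sigma>2 lam Lam h u \<rho> =
     (LINT v|lborel. Cs \<sigma>2 (h - u *\<^sub>R v) \<rho> * normal_dens lam ((\<rho>\<^sup>2 / 2) *\<^sub>R Lam) v)"

text \<open>K(h,u) = E over (rho^2, phi^2) with phi^2 ~ IG(alpha, beta^2/4),
  rho^2 | phi^2 ~ Ga(nu, 1/(4 phi^2)).\<close>
definition Kmix :: "real \<Rightarrow> real \<Rightarrow> real \<Rightarrow> real \<Rightarrow> real^'n \<Rightarrow> real^'n^'n \<Rightarrow> real^'n \<Rightarrow> real \<Rightarrow> real" where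
  "Kmix \<sigma>2 \<nu> \<alpha> \<beta> lam Lam h u =
     (LINT p:{0<..}|lborel. invgamma_dens \<alpha> (\<beta>\<^sup>2 / 4) p *
        (LINT r:{0<..}|lborel. gamma_dens \<nu> (1 / (4 * p)) r * Clag \<sigma>2 lam Lam h u (sqrt r)))"

end

theory Submission
  imports Defs "HOL-Probability.Probability"
begin

lemma det_shear_fin:
  fixes m n :: "'n::finite"
  assumes "m \<noteq> n"
  shows "det (matrix (\<lambda>v::real^'n. \<chi> i. if i = m then v $ m + v $ n else v $ i)) = 1"
proof -
  have "matrix (\<lambda>v::real^'n. \<chi> i. if i = m then v $ m + v $ n else v $ i)
      = (\<chi> k. if k = m then row m (mat 1) + 1 *s row n (mat 1) else row k (mat 1))"
    by (auto simp: vec_eq_iff matrix_def row_def mat_def axis_def)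
  then show ?thesis
    using det_row_operation[OF assms, of "mat 1 :: real^'n^'n" 1] by simp
qed

lemma measure_linear_image_fin:
  fixes f :: "real^'n::finite \<Rightarrow> real^'n"
  assumes "linear f" "S \<in> lmeasurable"
  shows "f ` S \<in> lmeasurable \<and> measure lebesgue (f ` S) = \<bar>det (matrix f)\<bar> * measure lebesgue S"
proof -
  let ?Q = "\<lambda>f S. measure lebesgue (f ` S) = \<bar>det (matrix f)\<bar> * measure lebesgue (S::(real^'n) set)"
  have "\<forall>S \<in> lmeasurable. (f ` S) \<in> lmeasurable \<and> ?Q f S"
  proof (rule induct_linear_elementary [OF \<open>linear f\<close>]; intro ballI)
    fix f g and S :: "(real,'n) vec set"
    assume "linear f" and "linear g"
      and f [rule_format]: "\<forall>S \<in> lmeasurable. f ` S \<in> lmeasurable \<and> ?Q f S"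
      and g [rule_format]: "\<forall>S \<in> lmeasurable. g ` S \<in> lmeasurable \<and> ?Q g S"
      and S: "S \<in> lmeasurable"
    then have gS: "g ` S \<in> lmeasurable"
      by blast
    show "(f \<circ> g) ` S \<in> lmeasurable \<and> ?Q (f \<circ> g) S"
      using f [OF gS] g [OF S] matrix_compose [OF \<open>linear g\<close> \<open>linear f\<close>]
      by (simp add: o_def image_comp abs_mult det_mul)
  next
    fix f :: "real^'n \<Rightarrow> real^'n" and i and S :: "(real^'n) set"
    assume "linear f" and 0: "\<And>x. f x $ i = 0" and "S \<in> lmeasurable"
    then have "\<not> inj f"
      by (metis (full_types) linear_injective_imp_surjective one_neq_zero surjE vec_component)
    have detf: "det (matrix f) = 0"
      using \<open>\<not> inj f\<close> det_nz_iff_inj[OF \<open>linear f\<close>] by blast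
    show "f ` S \<in> lmeasurable \<and> ?Q f S"
    proof
      show "f ` S \<in> lmeasurable"
        using lmeasurable_iff_indicator_has_integral \<open>linear f\<close> \<open>\<not> inj f\<close> negligible_UNIV negligible_linear_singular_image by blast
      have "measure lebesgue (f ` S) = 0"
        by (meson \<open>\<not> inj f\<close> \<open>linear f\<close> negligible_imp_measure0 negligible_linear_singular_image)
      also have "\<dots> = \<bar>det (matrix f)\<bar> * measure lebesgue S"
        by (simp add: detf)
      finally show "?Q f S" .
    qed
  next
    fix c and S :: "(real^'n) set"
    assume "S \<in> lmeasurable"
    show "(\<lambda>a. \<chi> i. c i * a $ i) ` S \<in> lmeasurable \<and> ?Q (\<lambda>a. \<chi> i. c i * a $ i) S"
    proof
      show "(\<lambda>a. \<chi> i. c i * a $ i) ` S \<in> lmeasurable"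
        by (simp add: \<open>S \<in> lmeasurable\<close> measurable_stretch)
      show "?Q (\<lambda>a. \<chi> i. c i * a $ i) S"
        by (simp add: measure_stretch [OF \<open>S \<in> lmeasurable\<close>, of c] axis_def matrix_def det_diagonal)
    qed
  next
    fix m :: "'n" and n :: "'n" and S :: "(real, 'n) vec set"
    assume "m \<noteq> n" and "S \<in> lmeasurable"
    let ?h = "\<lambda>v::(real, 'n) vec. \<chi> i. v $ Transposition.transpose m n i"
    have lin: "linear ?h"
      by (rule linearI) (simp_all add: plus_vec_def scaleR_vec_def)
    have meq: "measure lebesgue (?h ` cbox a b) = measure lebesgue (cbox a b)" for a b
    proof (cases "cbox a b = {}")
      case True then show ?thesis
        by simp
    next
      case False
      then have him: "?h ` (cbox a b) \<noteq> {}"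
        by blast
      have eq: "?h ` (cbox a b) = cbox (?h a) (?h b)"
        by (auto simp: image_iff lambda_swap_Galois mem_box_cart) (metis transpose_involutory)+
      show ?thesis
        using him prod.permute [OF permutes_swap_id, where S=UNIV and g="\<lambda>i. (b - a)$i", symmetric]
        by (simp add: eq content_cbox_cart False)
    qed
    have "(\<chi> i j. if Transposition.transpose m n i = j then 1 else 0) = (\<chi> i j. if j = Transposition.transpose m n i then 1 else (0::real))"
      by (auto intro!: Cart_lambda_cong)
    then have "matrix ?h = transpose(\<chi> i j. mat 1 $ i $ Transposition.transpose m n j)"
      by (auto simp: matrix_eq transpose_def axis_def mat_def matrix_def)
    then have 1: "\<bar>det (matrix ?h)\<bar> = 1"
      by (simp add: det_permute_columns permutes_swap_id sign_swap_id abs_mult)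
    show "?h ` S \<in> lmeasurable \<and> ?Q ?h S"
      using measure_linear_sufficient [OF lin \<open>S \<in> lmeasurable\<close>] meq 1 by force
  next
    fix m n :: "'n" and S :: "(real, 'n) vec set"
    assume "m \<noteq> n" and "S \<in> lmeasurable"
    let ?h = "\<lambda>v::(real, 'n) vec. \<chi> i. if i = m then v $ m + v $ n else v $ i"
    have lin: "linear ?h"
      by (rule linearI) (auto simp: algebra_simps plus_vec_def scaleR_vec_def vec_eq_iff)
    have 1: "det(matrix ?h) = 1"
      using det_shear_fin[OF \<open>m \<noteq> n\<close>] .
    have meq: "measure lebesgue (?h ` (cbox a b)) = measure lebesgue (cbox a b)" for a b
    proof (cases "cbox a b = {}")
      case True then show ?thesis by simp
    next
      case False
      then have ne: "(+) (\<chi> i. if i = n then - a $ n else 0) ` cbox a b \<noteq> {}"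
        by auto
      let ?v = "\<chi> i. if i = n then - a $ n else 0"
      have "?h ` cbox a b
            = (+) (\<chi> i. if i = m \<or> i = n then a $ n else 0) ` ?h ` (+) ?v ` (cbox a b)"
        using \<open>m \<noteq> n\<close> unfolding image_comp o_def by (force simp: vec_eq_iff)
      then have "measure lebesgue (?h ` (cbox a b))
               = measure lebesgue ((\<lambda>v. \<chi> i. if i = m then v $ m + v $ n else v $ i) `
                                   (+) ?v ` cbox a b)"
        by (rule ssubst) (rule measure_translation)
      also have "\<dots> = measure lebesgue ((\<lambda>v. \<chi> i. if i = m then v $ m + v $ n else v $ i) ` cbox (?v +a) (?v + b))"
        by (metis (no_types, lifting) cbox_translation)
      also have "\<dots> = measure lebesgue ((+) ?v ` cbox a b)"
        apply (subst measure_shear_interval)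
        using \<open>m \<noteq> n\<close> ne apply auto
        apply (simp add: cbox_translation)
        by (metis cbox_borel cbox_translation measure_completion sets_lborel)
      also have "\<dots> = measure lebesgue (cbox a b)"
        by (rule measure_translation)
        finally show ?thesis .
      qed
    show "?h ` S \<in> lmeasurable \<and> ?Q ?h S"
      using measure_linear_sufficient [OF lin \<open>S \<in> lmeasurable\<close>] meq 1 by force
  qed
  with assms show ?thesis
    by metis
qed


lemma lborel_linear_fin:
  fixes g :: "real^'n::finite \<Rightarrow> real^'n"
  assumes lin: "linear g" and det: "det (matrix g) \<noteq> 0"
  shows "lborel = density (distr lborel borel g) (\<lambda>_. ennreal \<bar>det (matrix g)\<bar>)"
proof (rule lborel_eqI)
  have inj: "inj g" using det det_nz_iff_inj[OF lin] by blast
  obtain h where h: "linear h" "h \<circ> g = id"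
    using linear_injective_left_inverse[OF lin inj] by blast
  have surj: "surj g" using linear_injective_imp_surjective[OF lin inj] by simp
  have hg: "h (g x) = x" for x using h(2) by (metis comp_apply id_apply)
  have gh: "g (h y) = y" for y using surj hg by (metis surjD)
  have dethg: "det (matrix h) * det (matrix g) = 1"
    using matrix_compose[OF lin h(1)] h(2) det_mul by (metis matrix_id)
  have gmeas[measurable]: "g \<in> borel_measurable borel"
    using lin by (intro borel_measurable_continuous_onI linear_continuous_on) (simp add: linear_conv_bounded_linear)
  fix l u :: "real^'n"
  assume le: "\<And>b. b \<in> Basis \<Longrightarrow> l \<bullet> b \<le> u \<bullet> b"
  have pre: "g -` box l u = h ` box l u"
    by (auto simp: image_iff) (metis hg, metis gh)
  have bm: "g -` box l u \<in> sets borel" using measurable_sets[OF gmeas, of "box l u"] by simp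
  have lm: "h ` box l u \<in> lmeasurable" and meq: "measure lebesgue (h ` box l u) = \<bar>det (matrix h)\<bar> * measure lebesgue (box l u)"
    using measure_linear_image_fin[OF h(1), of "box l u"] by auto
  have "emeasure lborel (g -` box l u) = emeasure lebesgue (h ` box l u)"
    using bm pre by (simp add: emeasure_completion[symmetric]) 
  also have "\<dots> = ennreal (\<bar>det (matrix h)\<bar> * measure lebesgue (box l u))"
    using lm meq by (simp add: emeasure_eq_measure2)
  finally have e1: "emeasure lborel (g -` box l u) = ennreal (\<bar>det (matrix h)\<bar> * measure lebesgue (box l u))" .
  have "emeasure (density (distr lborel borel g) (\<lambda>_. ennreal \<bar>det (matrix g)\<bar>)) (box l u)
      = ennreal \<bar>det (matrix g)\<bar> * emeasure lborel (g -` box l u)"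
    by (simp add: emeasure_density emeasure_distr nn_integral_cmult_indicator)
  also have "\<dots> = ennreal (measure lebesgue (box l u))"
    using dethg by (simp add: e1 ennreal_mult'[symmetric] abs_mult[symmetric] mult.commute flip: mult.assoc)
  also have "\<dots> = (\<Prod>b\<in>Basis. (u - l) \<bullet> b)"
    using le by (simp add: measure_lborel_box_eq[symmetric] measure_completion emeasure_lborel_box_eq prod_nonneg inner_diff_left)
  finally show "emeasure (density (distr lborel borel g) (\<lambda>_. ennreal \<bar>det (matrix g)\<bar>)) (box l u) = (\<Prod>b\<in>Basis. (u - l) \<bullet> b)" .
qed simp


lemma sym_form:
  fixes B :: "real^'n::finite^'n"
  assumes "transpose B = B"
  shows "x \<bullet> (B *v y) = y \<bullet> (B *v x)"
proof -
  have s: "B $ i $ j = B $ j $ i" for i j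
    using assms by (metis transpose_def vec_lambda_beta)
  have "x \<bullet> (B *v y) = (\<Sum>i\<in>UNIV. \<Sum>j\<in>UNIV. x $ i * B $ i $ j * y $ j)"
    by (simp add: inner_vec_def matrix_vector_mult_def sum_distrib_left mult.assoc)
  also have "\<dots> = (\<Sum>j\<in>UNIV. \<Sum>i\<in>UNIV. x $ i * B $ i $ j * y $ j)"
    by (rule sum.swap)
  also have "\<dots> = y \<bullet> (B *v x)"
    by (simp add: inner_vec_def matrix_vector_mult_def sum_distrib_left s mult_ac)
  finally show ?thesis .
qed

lemma congr_diag_aux:
  fixes B :: "real^'n::finite^'n"
  assumes sym: "transpose B = B" and pd: "\<And>x. x \<noteq> 0 \<Longrightarrow> x \<bullet> (B *v x) > 0"
  shows "\<exists>q::'n \<Rightarrow> real^'n. (\<forall>i\<in>K. q i $ i = 1 \<and> (\<forall>j. j \<notin> K \<longrightarrow> q i $ j = 0)) \<and>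
            (\<forall>i\<in>K. \<forall>j\<in>K. i \<noteq> j \<longrightarrow> q i \<bullet> (B *v q j) = 0)"
proof -
  have "finite K" by simp
  then show ?thesis
  proof (induction K rule: finite_induct)
    case empty
    then show ?case by auto
  next
    case (insert k K)
    obtain q where qK: "(\<forall>i\<in>K. q i $ i = 1 \<and> (\<forall>j. j \<notin> K \<longrightarrow> q i $ j = 0)) \<and>
            (\<forall>i\<in>K. \<forall>j\<in>K. i \<noteq> j \<longrightarrow> q i \<bullet> (B *v q j) = 0)" using insert.IH by (elim exE)
    have q1: "\<And>i. i\<in>K \<Longrightarrow> q i $ i = 1" and q2: "\<And>i j. i\<in>K \<Longrightarrow> j \<notin> K \<Longrightarrow> q i $ j = 0"
      and q3: "\<And>i j. i\<in>K \<Longrightarrow> j\<in>K \<Longrightarrow> i \<noteq> j \<Longrightarrow> q i \<bullet> (B *v q j) = 0" using qK by auto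
    have pos: "q i \<bullet> (B *v q i) > 0" if "i \<in> K" for i
    proof (rule pd)
      show "q i \<noteq> 0" using q1[OF that] by auto
    qed
    define c where "c i = q i \<bullet> (B *v axis k 1) / (q i \<bullet> (B *v q i))" for i
    define v where "v = axis k 1 - (\<Sum>i\<in>K. c i *\<^sub>R q i)"
    define q' where "q' = q(k := v)"
    have vk: "v $ k = 1"
      using insert(2) q2 by (simp add: v_def axis_def)
    have vj: "v $ j = 0" if "j \<notin> insert k K" for j
      using that q2 by (simp add: v_def axis_def)
    have vorth: "v \<bullet> (B *v q j) = 0" if "j \<in> K" for j
    proof -
      have "v \<bullet> (B *v q j) = axis k 1 \<bullet> (B *v q j) - (\<Sum>i\<in>K. c i * (q i \<bullet> (B *v q j)))"
        by (simp add: v_def inner_diff_left inner_sum_left)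
      also have "(\<Sum>i\<in>K. c i * (q i \<bullet> (B *v q j))) = c j * (q j \<bullet> (B *v q j))"
        using that q3 insert(1) by (subst sum.remove[of K j]) (auto intro!: sum.neutral)  
      also have "\<dots> = q j \<bullet> (B *v axis k 1)"
        using pos[OF that] by (simp add: c_def)
      also have "q j \<bullet> (B *v axis k 1) = axis k 1 \<bullet> (B *v q j)"
        using sym_form[OF sym] by simp
      finally show ?thesis by simp
    qed
    show ?case
    proof (intro exI[of _ q'] conjI ballI allI impI)
      fix i assume i: "i \<in> insert k K"
      show "q' i $ i = 1" using i vk q1 insert(2) by (auto simp: q'_def)
      fix j assume "j \<notin> insert k K"
      then show "q' i $ j = 0" using i vj q2 insert(2) by (auto simp: q'_def)
    next
      fix i j assume i: "i \<in> insert k K" and j: "j \<in> insert k K" and ij: "i \<noteq> j"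
      show "q' i \<bullet> (B *v q' j) = 0"
      proof (cases "i = k")
        case True
        then have "j \<in> K" using j ij by auto
        then show ?thesis using True vorth insert(2) by (auto simp: q'_def)
      next
        case False
        then have iK: "i \<in> K" using i by auto
        show ?thesis
        proof (cases "j = k")
          case True
          have "q i \<bullet> (B *v v) = v \<bullet> (B *v q i)" using sym_form[OF sym] by blast
          then show ?thesis using vorth[OF iK] True \<open>i \<noteq> k\<close> by (simp add: q'_def)
        next
          case False
          then show ?thesis using q3 iK j ij \<open>i \<noteq> k\<close> insert(2) by (auto simp: q'_def)
        qed
      qed
    qed
  qed
qed


lemma Basis_real_vec: "(Basis :: (real^'n::finite) set) = range (\<lambda>i. axis i 1)"
  by (auto simp: Basis_vec_def)

lemma inj_axis1: "inj (\<lambda>i::'n::finite. axis i (1::real))"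
  by (auto simp: inj_def axis_eq_axis)

lemma prod_Basis_vec: "(\<Prod>b\<in>(Basis :: (real^'n::finite) set). f b) = (\<Prod>i\<in>UNIV. f (axis i 1))"
  unfolding Basis_real_vec by (subst prod.reindex[OF inj_axis1]) simp

lemma gauss1d:
  assumes "d > (0::real)"
  shows "(\<integral>\<^sup>+x. ennreal (exp (-(d * x\<^sup>2))) \<partial>lborel) = ennreal (sqrt (pi / d))"
proof -
  define s where "s = sqrt (1 / (2 * d))"
  have s2: "s\<^sup>2 = 1 / (2 * d)" using assms by (simp add: s_def)
  have eq: "exp (-(d * x\<^sup>2)) = sqrt (pi / d) * normal_density 0 s x" for x
  proof -
    have "sqrt (2 * pi * s\<^sup>2) = sqrt (pi / d)" using assms by (simp add: s2)
    moreover have "- x\<^sup>2 / (2 * s\<^sup>2) = -(d * x\<^sup>2)" using assms by (simp add: s2 field_simps)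
    ultimately show ?thesis using assms by (simp add: normal_density_def)
  qed
  have spos: "s > 0" using assms by (simp add: s_def)
  have "(\<integral>\<^sup>+x. ennreal (normal_density 0 s x) \<partial>lborel) = 1"
    by (subst nn_integral_eq_integral) (auto simp: integrable_normal_density[OF spos] integral_normal_density[OF spos])
  then have "(\<integral>\<^sup>+x. ennreal (sqrt (pi / d)) * ennreal (normal_density 0 s x) \<partial>lborel) = ennreal (sqrt (pi / d))"
    by (subst nn_integral_cmult) auto
  then show ?thesis
    using assms by (simp add: eq ennreal_mult)
qed

lemma entry_congr:
  fixes B M :: "real^'n::finite^'n"
  defines "q \<equiv> \<lambda>j. M *v axis j 1"
  shows "(transpose M ** B ** M) $ i $ j = q i \<bullet> (B *v q j)"
  unfolding q_def
  by (simp add: matrix_matrix_mult_def matrix_vector_mult_def transpose_def inner_vec_def axis_def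
       sum_distrib_left sum_distrib_right mult_ac if_distrib sum.delta cong: if_cong)
     (subst sum.swap, simp add: sum_distrib_left mult_ac)

lemma congr_diag:
  fixes B :: "real^'n::finite^'n"
  assumes sym: "transpose B = B" and pd: "\<And>x. x \<noteq> 0 \<Longrightarrow> x \<bullet> (B *v x) > 0"
  obtains M where "det M \<noteq> 0" "\<And>i j. i \<noteq> j \<Longrightarrow> (transpose M ** B ** M) $ i $ j = 0"
    "\<And>i. (transpose M ** B ** M) $ i $ i > 0" "det B > 0"
proof -
  obtain q :: "'n \<Rightarrow> real^'n" where q1: "\<And>i. q i $ i = 1" and q3: "\<And>i j. i \<noteq> j \<Longrightarrow> q i \<bullet> (B *v q j) = 0"
    using congr_diag_aux[OF sym pd, of UNIV] by auto
  define M :: "real^'n^'n" where "M = (\<chi> r c. q c $ r)"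
  have Mq: "M *v axis j 1 = q j" for j
    by (simp add: M_def matrix_vector_mult_def axis_def vec_eq_iff if_distrib sum.delta cong: if_cong)
  let ?D = "transpose M ** B ** M"
  have off: "?D $ i $ j = 0" if "i \<noteq> j" for i j
    using entry_congr[of M B i j] q3[OF that] by (simp add: Mq)
  have dpos: "?D $ i $ i > 0" for i
  proof -
    have "q i \<noteq> 0" using q1[of i] by auto
    then show ?thesis using entry_congr[of M B i i] pd by (simp add: Mq)
  qed
  have "det ?D = (\<Prod>i\<in>UNIV. ?D $ i $ i)"
    using off by (intro det_diagonal) auto
  then have detD: "det ?D > 0" using dpos by (simp add: prod_pos)
  have "det ?D = det M * det M * det B"
    by (simp add: det_mul)
  then have "det M \<noteq> 0" "det B > 0" using detD
    by (auto simp: zero_less_mult_iff) 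
  then show ?thesis using that off dpos by blast
qed

lemma quad_diag:
  fixes D :: "real^'n::finite^'n"
  assumes "\<And>i j. i \<noteq> j \<Longrightarrow> D $ i $ j = 0"
  shows "y \<bullet> (D *v y) = (\<Sum>i\<in>UNIV. D $ i $ i * (y $ i)\<^sup>2)"
proof -
  have inner: "(\<Sum>j\<in>UNIV. y$j * D$i$j) = y$i * D$i$i" for i
    by (subst sum.remove[of UNIV i]) (auto intro!: sum.neutral simp: assms)
  show ?thesis
    unfolding inner_vec_def matrix_vector_mult_def by (simp add: mult.commute[of "D $ _ $ _"] inner power2_eq_square mult_ac)
qed

lemma quad_congr:
  fixes B M :: "real^'n::finite^'n"
  shows "(M *v y) \<bullet> (B *v (M *v y)) = y \<bullet> ((transpose M ** B ** M) *v y)"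
proof -
  have "(M *v y) \<bullet> (B *v (M *v y)) = (y v* transpose M) \<bullet> (B *v (M *v y))"
    by (simp only: vector_transpose_matrix)
  also have "\<dots> = y \<bullet> (transpose M *v (B *v (M *v y)))"
    by (rule dot_lmul_matrix)
  also have "\<dots> = y \<bullet> ((transpose M ** B ** M) *v y)"
    by (simp only: matrix_vector_mul_assoc matrix_mul_assoc)
  finally show ?thesis .
qed

lemma sqrt_prod: "sqrt (prod f A) = (\<Prod>i\<in>A. sqrt (f i))"
  by (induction A rule: infinite_finite_induct) (auto simp: real_sqrt_mult)

lemma gauss_nn:
  fixes B :: "real^'n::finite^'n"
  assumes sym: "transpose B = B" and pd: "\<And>x. x \<noteq> 0 \<Longrightarrow> x \<bullet> (B *v x) > 0"
  shows "(\<integral>\<^sup>+x. ennreal (exp (-(x \<bullet> (B *v x)))) \<partial>lborel) = ennreal (sqrt (pi ^ CARD('n) / det B))"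
proof -
  obtain M where dM: "det M \<noteq> 0" and off: "\<And>i j. i \<noteq> j \<Longrightarrow> (transpose M ** B ** M) $ i $ j = 0"
    and dpos: "\<And>i. (transpose M ** B ** M) $ i $ i > 0" and dB: "det B > 0"
    using congr_diag[OF sym pd] by blast
  define D where "D = transpose M ** B ** M"
  define d where "d i = D $ i $ i" for i
  have dpos': "d i > 0" for i using dpos by (simp add: d_def D_def)
  define e :: "real^'n \<Rightarrow> real" where "e b = d (SOME i. b = axis i 1)" for b
  have eax: "e (axis i 1) = d i" for i by (simp add: e_def axis_eq_axis)
  have epos: "e b > 0" for b by (simp add: e_def dpos')
  have detD: "det D = (\<Prod>i\<in>UNIV. d i)"
    unfolding d_def using off by (intro det_diagonal) (auto simp: D_def)
  have detD2: "det D = det M * det M * det B"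
    by (simp add: D_def det_mul)
  have detDpos: "det D > 0" using detD dpos' by (simp add: prod_pos)
  let ?g = "(*v) M"
  have lin: "linear ?g" by (rule matrix_vector_mul_linear)
  have mg: "matrix ?g = M" by simp
  have gmeas[measurable]: "?g \<in> borel_measurable borel"
    using lin by (intro borel_measurable_continuous_onI linear_continuous_on) (simp add: linear_conv_bounded_linear)
  have fmeas[measurable]: "(\<lambda>x::real^'n. exp (-(x \<bullet> (B *v x)))) \<in> borel_measurable borel"
    by (intro borel_measurable_continuous_onI continuous_intros) 
  have "(\<integral>\<^sup>+x. ennreal (exp (-(x \<bullet> (B *v x)))) \<partial>lborel)
      = (\<integral>\<^sup>+x. ennreal (exp (-(x \<bullet> (B *v x)))) \<partial>(density (distr lborel borel ?g) (\<lambda>_. ennreal \<bar>det M\<bar>)))"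
    using lborel_linear_fin[OF lin] dM mg by simp
  also have "\<dots> = ennreal \<bar>det M\<bar> * (\<integral>\<^sup>+y. ennreal (exp (-((M *v y) \<bullet> (B *v (M *v y))))) \<partial>lborel)"
    by (simp add: nn_integral_density nn_integral_distr nn_integral_cmult)
  also have "(\<lambda>y. ennreal (exp (-((M *v y) \<bullet> (B *v (M *v y)))))) = (\<lambda>y. ennreal (\<Prod>b\<in>Basis. exp (-(e b * (y \<bullet> b)\<^sup>2))))"
  proof
    fix y :: "real^'n"
    have "(M *v y) \<bullet> (B *v (M *v y)) = (\<Sum>i\<in>UNIV. d i * (y $ i)\<^sup>2)"
      unfolding quad_congr D_def[symmetric] d_def using off by (intro quad_diag) (auto simp: D_def)
    then have "exp (-((M *v y) \<bullet> (B *v (M *v y)))) = (\<Prod>i\<in>UNIV. exp (-(d i * (y $ i)\<^sup>2)))"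
      by (simp add: exp_sum[symmetric] sum_negf)
    also have "\<dots> = (\<Prod>b\<in>Basis. exp (-(e b * (y \<bullet> b)\<^sup>2)))"
      unfolding prod_Basis_vec by (simp add: cart_eq_inner_axis eax)
    finally show "ennreal (exp (-((M *v y) \<bullet> (B *v (M *v y))))) = ennreal (\<Prod>b\<in>Basis. exp (-(e b * (y \<bullet> b)\<^sup>2)))"
      by simp
  qed
  also have "(\<integral>\<^sup>+y. ennreal (\<Prod>b\<in>Basis. exp (-(e b * (y \<bullet> b)\<^sup>2))) \<partial>lborel)
       = (\<Prod>b\<in>Basis. (\<integral>\<^sup>+t. ennreal (exp (-(e b * t\<^sup>2))) \<partial>lborel))"
  proof -
    have e: "(\<lambda>y. ennreal (\<Prod>b\<in>Basis. exp (-(e b * (y \<bullet> b)\<^sup>2))))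
        = (\<lambda>y. \<Prod>b\<in>Basis. ennreal (exp (-(e b * (y \<bullet> b)\<^sup>2))))"
      by (simp add: prod_ennreal)
    show ?thesis unfolding e
      by (rule nn_integral_lborel_prod[where f="\<lambda>b t. ennreal (exp (-(e b * t\<^sup>2)))"]) auto
  qed
  also have "\<dots> = (\<Prod>b\<in>Basis. ennreal (sqrt (pi / e b)))"
    by (intro prod.cong refl gauss1d epos)
  also have "\<dots> = ennreal (\<Prod>i\<in>UNIV. sqrt (pi / d i))"
    unfolding prod_Basis_vec eax using dpos' by (intro prod_ennreal) (auto simp: less_imp_le)
  also have "(\<Prod>i\<in>UNIV. sqrt (pi / d i)) = sqrt (pi ^ CARD('n) / det D)"
    by (simp add: detD sqrt_prod[symmetric] prod_dividef)
  finally have "(\<integral>\<^sup>+x. ennreal (exp (-(x \<bullet> (B *v x)))) \<partial>lborel) = ennreal (\<bar>det M\<bar> * sqrt (pi ^ CARD('n) / det D))"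
    using detDpos by (simp add: ennreal_mult)
  also have "\<bar>det M\<bar> * sqrt (pi ^ CARD('n) / det D) = sqrt (pi ^ CARD('n) / det B)"
  proof -
    have a: "\<bar>det M\<bar> = sqrt (det M * det M)" using real_sqrt_abs[of "det M"] by (simp add: power2_eq_square)
    have b: "det M * det M * (pi ^ CARD('n) / det D) = pi ^ CARD('n) / det B"
      using dM dB unfolding detD2 by (simp add: field_simps)
    show ?thesis unfolding a real_sqrt_mult[symmetric] b ..
  qed
  finally show ?thesis .
qed


lemma minv_eq:
  fixes A B :: "real^'n::finite^'n"
  assumes "A ** B = mat 1"
  shows "matrix_inv A = B"
proof -
  have BA: "B ** A = mat 1" using assms matrix_left_right_inverse by blast
  have "\<exists>A'. A ** A' = mat 1 \<and> A' ** A = mat 1" using assms BA by blast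
  then have "A ** matrix_inv A = mat 1 \<and> matrix_inv A ** A = mat 1"
    unfolding matrix_inv_def by (rule someI_ex)
  then have "matrix_inv A = matrix_inv A ** (A ** B)" using assms by simp
  also have "\<dots> = B" using \<open>A ** matrix_inv A = mat 1 \<and> matrix_inv A ** A = mat 1\<close>
    by (simp add: matrix_mul_assoc)
  finally show ?thesis .
qed

lemma minv_props:
  fixes A :: "real^'n::finite^'n"
  assumes "det A \<noteq> 0"
  shows "A ** matrix_inv A = mat 1" "matrix_inv A ** A = mat 1"
proof -
  have "invertible A" using assms invertible_det_nz by blast
  then have "\<exists>A'. A ** A' = mat 1 \<and> A' ** A = mat 1" unfolding invertible_def by blast
  then have "A ** matrix_inv A = mat 1 \<and> matrix_inv A ** A = mat 1"
    unfolding matrix_inv_def by (rule someI_ex)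
  then show "A ** matrix_inv A = mat 1" "matrix_inv A ** A = mat 1" by auto
qed

lemma pd_det_nz:
  fixes A :: "real^'n::finite^'n"
  assumes pd: "\<And>x. x \<noteq> 0 \<Longrightarrow> x \<bullet> (A *v x) > 0"
  shows "det A \<noteq> 0"
proof -
  have "inj ((*v) A)"
  proof (rule injI)
    fix x y assume "A *v x = A *v y"
    then have "A *v (x - y) = 0" by (simp add: matrix_vector_mult_diff_distrib)
    then have "(x - y) \<bullet> (A *v (x - y)) = 0" by simp
    then show "x = y" using pd[of "x - y"] by (cases "x - y = 0") auto
  qed
  then show ?thesis
    using det_nz_iff_inj[OF matrix_vector_mul_linear[of A]] by simp
qed

lemma det_scaleR_mat:
  fixes A :: "real^'n::finite^'n"
  shows "det (c *\<^sub>R A) = c ^ CARD('n) * det A"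
proof -
  have "c *\<^sub>R A = (c *\<^sub>R mat 1) ** A"
    by (metis matrix_mul_lid scalar_matrix_assoc)
  moreover have "det (c *\<^sub>R mat 1 :: real^'n^'n) = c ^ CARD('n)"
    by (subst det_diagonal) (auto simp: mat_def)
  ultimately show ?thesis by (simp add: det_mul)
qed

lemma transpose_minv:
  fixes A :: "real^'n::finite^'n"
  assumes "transpose A = A" "det A \<noteq> 0"
  shows "transpose (matrix_inv A) = matrix_inv A"
proof -
  have "transpose (matrix_inv A) ** A = mat 1"
    using minv_props(1)[OF assms(2)] assms(1) by (metis matrix_transpose_mul transpose_mat)
  then have "A ** transpose (matrix_inv A) = mat 1" using matrix_left_right_inverse by blast
  then show ?thesis using minv_eq by metis
qed


lemma gamma_hk0:
  fixes a :: real assumes a: "a > 0"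
  shows "((\<lambda>t. t powr (a - 1) / exp t) has_integral Gamma a) {0<..}"
proof -
  have "((\<lambda>t. t powr (a - 1) / exp t) has_integral Gamma a) {0..}"
    using Gamma_integral_real[OF a] .
  moreover have e1: "{x \<in> {0..} - {0<..}. x powr (a - 1) / exp x \<noteq> (0::real)} = {}" by auto
  moreover have e2: "{x \<in> {0<..} - {0..}. x powr (a - 1) / exp x \<noteq> (0::real)} = {}" by auto
  ultimately show ?thesis
    using has_integral_spike_set_eq[where f="\<lambda>x. x powr (a - 1) / exp x" and S="{0..}" and T="{0<..}" and y="Gamma a"]
    by (simp only: negligible_empty)
qed

lemma gamma_hk:
  fixes a c :: real assumes a: "a > 0" and c: "c > 0"
  shows "((\<lambda>t. t powr (a - 1) * exp (- (c * t))) has_integral Gamma a / c powr a) {0<..}"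
proof -
  let ?f = "\<lambda>t::real. t powr (a - 1) / exp t"
  have f: "(?f has_integral Gamma a) {0<..}" using gamma_hk0[OF a] .
  have fabs: "?f absolutely_integrable_on {0<..}"
    using f by (intro nonnegative_absolutely_integrable_1) (auto simp: has_integral_integrable)
  have img: "(\<lambda>t. c * t) ` {0<..} = {0<..}"
  proof
    show "{0<..} \<subseteq> (\<lambda>t. c * t) ` {0<..}"
    proof
      fix x :: real assume "x \<in> {0<..}"
      then show "x \<in> (\<lambda>t. c * t) ` {0<..}" using c by (intro image_eqI[of _ _ "x / c"]) auto
    qed
  qed (use c in auto)
  have "(\<lambda>t. \<bar>c\<bar> * ?f (c * t)) absolutely_integrable_on {0<..} \<and>
        integral {0<..} (\<lambda>t. \<bar>c\<bar> * ?f (c * t)) = Gamma a"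
    using has_absolute_integral_change_of_variables_1'[of "{0<..}" "\<lambda>t. c * t" "\<lambda>_. c" ?f "Gamma a"]
      fabs f c img
    by (auto intro!: derivative_eq_intros simp: inj_on_def integral_unique)
  then have "((\<lambda>t. \<bar>c\<bar> * ?f (c * t)) has_integral Gamma a) {0<..}"
    using has_integral_integral set_lebesgue_integral_eq_integral(1) by metis
  then have "((\<lambda>t. (1 / c powr a) * (\<bar>c\<bar> * ?f (c * t))) has_integral (1 / c powr a) * Gamma a) {0<..}"
    by (rule has_integral_mult_right)
  moreover have "(1 / c powr a) * (\<bar>c\<bar> * ?f (c * t)) = t powr (a - 1) * exp (- (c * t))" if "t \<in> {0<..}" for t
  proof -
    have "(c * t) powr (a - 1) = c powr (a - 1) * t powr (a - 1)" using c that by (simp add: powr_mult)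
    moreover have "c * c powr (a - 1) = c powr a" using c by (simp add: powr_diff powr_one)
    ultimately show ?thesis using c that by (simp add: exp_minus field_simps)
  qed
  ultimately show ?thesis
    by (subst (asm) has_integral_cong) (auto simp: field_simps)
qed

lemma invgamma_hk:
  fixes a c :: real assumes a: "a > 0" and c: "c > 0"
  shows "((\<lambda>x. x powr (- a - 1) * exp (- (c / x))) has_integral Gamma a / c powr a) {0<..}"
proof -
  let ?f = "\<lambda>x::real. x powr (- a - 1) * exp (- (c / x))"
  let ?h = "\<lambda>t::real. \<bar>- 1 / t\<^sup>2\<bar> * ?f (1 / t)"
  have heq: "?h t = t powr (a - 1) * exp (- (c * t))" if "t \<in> {0<..}" for t
  proof -
    have t: "t > 0" using that by simp
    have "(1 / t) powr (- a - 1) = t powr (a + 1)"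
    proof -
      have e: "- a - 1 = - (a + 1)" by simp
      show ?thesis using t unfolding e powr_minus_divide by (simp add: powr_divide)
    qed
    moreover have "t powr (a + 1) = t powr (a - 1) * t\<^sup>2"
    proof -
      have "t powr (a + 1) = t powr ((a - 1) + 2)" by (simp add: add.commute)
      also have "\<dots> = t powr (a - 1) * t powr 2" by (rule powr_add)
      also have "t powr 2 = t\<^sup>2" using t by (simp add: powr_numeral)
      finally show ?thesis .
    qed
    ultimately show ?thesis using t by (simp add: field_simps)
  qed
  have h: "(?h has_integral Gamma a / c powr a) {0<..}"
    by (rule has_integral_eq[OF _ gamma_hk[OF a c]]) (rule heq[symmetric])
  have habs: "?h absolutely_integrable_on {0<..}"
    using h by (intro nonnegative_absolutely_integrable_1) (auto simp: has_integral_integrable)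
  have img: "(\<lambda>t. 1 / t) ` {0<..} = ({0<..} :: real set)"
  proof
    show "{0<..} \<subseteq> (\<lambda>t. 1 / t) ` ({0<..} :: real set)"
    proof
      fix x :: real assume "x \<in> {0<..}"
      then show "x \<in> (\<lambda>t. 1 / t) ` {0<..}" by (intro image_eqI[of _ _ "1 / x"]) auto
    qed
  qed auto
  have der: "((\<lambda>t. 1 / t) has_field_derivative (- 1 / t\<^sup>2)) (at t within {0<..})" if "t \<in> {0<..}" for t :: real
  proof -
    have t: "t \<noteq> 0" using that by simp
    have "((\<lambda>t. 1 / t) has_field_derivative (- 1 / t\<^sup>2)) (at t)"
      by (rule derivative_eq_intros refl | use t in \<open>simp add: power2_eq_square\<close>)+
    then show ?thesis by (rule has_field_derivative_at_within)
  qed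
  have inj: "inj_on (\<lambda>t::real. 1 / t) {0<..}" by (auto simp: inj_on_def)
  have "?f absolutely_integrable_on {0<..} \<and> integral {0<..} ?f = Gamma a / c powr a"
    using has_absolute_integral_change_of_variables_1'[of "{0<..}" "\<lambda>t. 1 / t" "\<lambda>t. - 1 / t\<^sup>2" ?f "Gamma a / c powr a"]
      habs h der inj img by (auto simp: integral_unique)
  then show ?thesis
    using has_integral_integral set_lebesgue_integral_eq_integral(1) by metis
qed

lemma gamma_nn:
  fixes a c :: real assumes a: "a > 0" and c: "c > 0"
  shows "(\<integral>\<^sup>+t. ennreal (t powr (a - 1) * exp (- (c * t))) * indicator {0<..} t \<partial>lborel) = ennreal (Gamma a / c powr a)"
  by (rule nn_integral_has_integral_lebesgue'[OF _ gamma_hk[OF a c]]) auto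

lemma invgamma_nn:
  fixes a c :: real assumes a: "a > 0" and c: "c > 0"
  shows "(\<integral>\<^sup>+x. ennreal (x powr (- a - 1) * exp (- (c / x))) * indicator {0<..} x \<partial>lborel) = ennreal (Gamma a / c powr a)"
  by (rule nn_integral_has_integral_lebesgue'[OF _ invgamma_hk[OF a c]]) auto


lemma complete_square:
  fixes P Bi :: "real^'n::finite^'n" and m z c :: "real^'n" and u :: real
  defines "B \<equiv> u\<^sup>2 *\<^sub>R mat 1 + P"
  assumes symP: "transpose P = P" and BBi: "B ** Bi = mat 1"
    and c: "c = u *\<^sub>R (Bi *v m)"
  shows "(norm (m - u *\<^sub>R (c + z)))\<^sup>2 + (c + z) \<bullet> (P *v (c + z))
       = z \<bullet> (B *v z) + (m \<bullet> m - u\<^sup>2 * (m \<bullet> (Bi *v m)))"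
proof -
  have symB: "transpose B = B" using symP by (simp add: B_def transpose_def vec_eq_iff mat_def)
  have Bw: "B *v w = u\<^sup>2 *\<^sub>R w + P *v w" for w
    by (simp add: B_def matrix_vector_mult_add_rdistrib scaleR_matrix_vector_assoc[symmetric])
  have BBim: "B *v (Bi *v m) = m" using BBi by (simp add: matrix_vector_mul_assoc)
  define w where "w = c + z"
  have zw: "z = w - c" by (simp add: w_def)
  have L: "(norm (m - u *\<^sub>R w))\<^sup>2 + w \<bullet> (P *v w) = m \<bullet> m - 2 * u * (m \<bullet> w) + w \<bullet> (B *v w)"
  proof -
    have "(norm (m - u *\<^sub>R w))\<^sup>2 = (m - u *\<^sub>R w) \<bullet> (m - u *\<^sub>R w)" by (simp add: power2_norm_eq_inner)
    also have "\<dots> = m \<bullet> m - 2 * u * (m \<bullet> w) + u\<^sup>2 * (w \<bullet> w)"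
      by (simp add: inner_diff_left inner_diff_right inner_commute algebra_simps power2_eq_square)
    finally show ?thesis by (simp add: Bw inner_add_right)
  qed
  have cBw: "c \<bullet> (B *v w) = u * (m \<bullet> w)"
  proof -
    have "c \<bullet> (B *v w) = u * ((Bi *v m) \<bullet> (B *v w))" by (simp add: c)
    also have "(Bi *v m) \<bullet> (B *v w) = w \<bullet> (B *v (Bi *v m))" using sym_form[OF symB] by blast
    finally show ?thesis by (simp add: BBim inner_commute)
  qed
  have wBc: "w \<bullet> (B *v c) = c \<bullet> (B *v w)" using sym_form[OF symB] by blast
  have cBc: "c \<bullet> (B *v c) = u\<^sup>2 * (m \<bullet> (Bi *v m))"
    by (simp add: c matrix_vector_mult_scaleR BBim power2_eq_square inner_commute)
  have R: "z \<bullet> (B *v z) = w \<bullet> (B *v w) - 2 * (c \<bullet> (B *v w)) + c \<bullet> (B *v c)"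
    unfolding zw using wBc by (simp add: matrix_vector_mult_diff_distrib inner_diff_left inner_diff_right)
  show ?thesis
    unfolding w_def[symmetric] L R cBw cBc by (simp add: algebra_simps)
qed

lemma mat_sub_ldistrib: "(A::real^'n::finite^'n) ** (B - C) = A ** B - A ** C"
  using matrix_add_ldistrib[of A "B - C" C] by (simp add: eq_diff_eq)

lemma cont_mv[continuous_intros]:
  fixes A :: "real^'n::finite^'m::finite"
  assumes "continuous_on S f"
  shows "continuous_on S (\<lambda>x. A *v f x)"
proof -
  have "bounded_linear ((*v) A)" by (simp add: linear_conv_bounded_linear[symmetric])
  then have "continuous_on UNIV ((*v) A)" by (rule linear_continuous_on)
  then show ?thesis using continuous_on_compose2[OF _ assms] by fastforce
qed

lemma nn_integral_translate:
  fixes f :: "'a::euclidean_space \<Rightarrow> ennreal"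
  assumes [measurable]: "f \<in> borel_measurable borel"
  shows "(\<integral>\<^sup>+x. f x \<partial>lborel) = (\<integral>\<^sup>+x. f (t + x) \<partial>lborel)"
proof -
  have e: "lborel = density (distr lborel borel (\<lambda>x. t + 1 *\<^sub>R x)) (\<lambda>_. \<bar>1::real\<bar> ^ DIM('a))"
    using lborel_affine[of "1::real" t] by simp
  show ?thesis
    by (subst (1) e) (simp add: nn_integral_density nn_integral_distr)
qed

lemma Clag_closed:
  fixes lam h :: "real^'n::finite" and Lam :: "real^'n^'n" and u r \<sigma>2 :: real
  assumes symL: "transpose Lam = Lam" and pdL: "\<And>x. x \<noteq> 0 \<Longrightarrow> x \<bullet> (Lam *v x) > 0"
    and r: "r > 0" and s: "\<sigma>2 \<ge> 0"
  shows "Clag \<sigma>2 lam Lam h u (sqrt r) =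
    \<sigma>2 * det (mat 1 + u\<^sup>2 *\<^sub>R Lam) powr (- 1 / 2) *
      exp (- ((h - u *\<^sub>R lam) \<bullet> (matrix_inv (u\<^sup>2 *\<^sub>R Lam + mat 1) *v (h - u *\<^sub>R lam))) / r)"
proof -
  define d where "d = CARD('n)"
  have dL: "det Lam \<noteq> 0" using pd_det_nz pdL by blast
  define P where "P = matrix_inv Lam"
  have LP: "Lam ** P = mat 1" and PL: "P ** Lam = mat 1" using minv_props[OF dL] by (auto simp: P_def)
  have symP: "transpose P = P" using transpose_minv[OF symL dL] by (simp add: P_def)
  have pdP: "x \<bullet> (P *v x) > 0" if "x \<noteq> 0" for x
  proof -
    have "P *v x \<noteq> 0"
    proof
      assume "P *v x = 0"
      then have "Lam *v (P *v x) = 0" by simp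
      then show False using LP that by (simp add: matrix_vector_mul_assoc)
    qed
    then have "(P *v x) \<bullet> (Lam *v (P *v x)) > 0" using pdL by blast
    also have "Lam *v (P *v x) = x" using LP by (simp add: matrix_vector_mul_assoc)
    finally show ?thesis using sym_form[OF symP] by (simp add: inner_commute)
  qed
  define B where "B = u\<^sup>2 *\<^sub>R mat 1 + P"
  have symB: "transpose B = B" using symP by (simp add: B_def transpose_def vec_eq_iff mat_def)
  have pdB: "x \<bullet> (B *v x) > 0" if "x \<noteq> 0" for x
  proof -
    have "x \<bullet> (B *v x) = u\<^sup>2 * (x \<bullet> x) + x \<bullet> (P *v x)"
      by (simp add: B_def matrix_vector_mult_add_rdistrib scaleR_matrix_vector_assoc[symmetric] inner_add_right)
    moreover have "u\<^sup>2 * (x \<bullet> x) \<ge> 0" by simp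
    ultimately show ?thesis using pdP[OF that] by linarith
  qed
  have dB: "det B \<noteq> 0" using pd_det_nz pdB by blast
  define Bi where "Bi = matrix_inv B"
  have BBi: "B ** Bi = mat 1" using minv_props[OF dB] by (simp add: Bi_def)
  define m where "m = h - u *\<^sub>R lam"
  define c where "c = u *\<^sub>R (Bi *v m)"
  define K where "K = m \<bullet> m - u\<^sup>2 * (m \<bullet> (Bi *v m))"
  \<comment> \<open>Woodbury\<close>
  have LB: "Lam ** B = u\<^sup>2 *\<^sub>R Lam + mat 1"
    by (simp add: B_def matrix_add_ldistrib matrix_scalar_ac LP)
  have WB: "matrix_inv (u\<^sup>2 *\<^sub>R Lam + mat 1) = mat 1 - u\<^sup>2 *\<^sub>R Bi"
  proof (rule minv_eq)
    have "(Lam ** B) ** (mat 1 - u\<^sup>2 *\<^sub>R Bi) = Lam ** B - u\<^sup>2 *\<^sub>R (Lam ** (B ** Bi))"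
      by (simp add: mat_sub_ldistrib matrix_scalar_ac matrix_mul_assoc scalar_matrix_assoc)
    also have "\<dots> = mat 1" by (simp add: BBi LB)
    finally show "(u\<^sup>2 *\<^sub>R Lam + mat 1) ** (mat 1 - u\<^sup>2 *\<^sub>R Bi) = mat 1" by (simp add: LB)
  qed
  have Keq: "K = m \<bullet> (matrix_inv (u\<^sup>2 *\<^sub>R Lam + mat 1) *v m)"
    by (simp add: WB K_def matrix_vector_mult_diff_rdistrib scaleR_matrix_vector_assoc[symmetric] inner_diff_right)
  have detLB: "det Lam * det B = det (mat 1 + u\<^sup>2 *\<^sub>R Lam)"
    by (simp add: det_mul[symmetric] LB add.commute)
  obtain M1 where "det Lam > 0" using congr_diag[OF symL pdL] by blast
  then have dLpos: "det Lam > 0" .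
  obtain M2 where "det B > 0" using congr_diag[OF symB pdB] by blast
  then have dBpos: "det B > 0" .
  have r2: "(sqrt r)\<^sup>2 = r" using r by simp
  define S where "S = (r/2) *\<^sub>R Lam"
  have Sinv: "matrix_inv S = (2/r) *\<^sub>R P"
  proof (rule minv_eq)
    show "S ** ((2/r) *\<^sub>R P) = mat 1"
      using r by (simp add: S_def matrix_scalar_ac scalar_matrix_assoc[symmetric] LP)
  qed
  have detS: "det S = (r/2)^d * det Lam" by (simp add: S_def det_scaleR_mat d_def)
  define N where "N = sqrt ((2*pi)^d * det S)"
  have N: "N = sqrt ((pi * r)^d * det Lam)"
  proof -
    have "(2*pi)^d * (r/2)^d = (2*pi*(r/2))^d" by (rule power_mult_distrib[symmetric])
    also have "2*pi*(r/2) = pi * r" by simp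
    finally show ?thesis by (simp add: N_def detS mult.assoc[symmetric])
  qed
  have Npos: "N > 0" using dLpos r by (simp add: N)
  define F where "F v = Cs \<sigma>2 (h - u *\<^sub>R v) (sqrt r) * normal_dens lam (((sqrt r)\<^sup>2 / 2) *\<^sub>R Lam) v" for v
  have Fdef: "F v = \<sigma>2 * exp (- (norm (h - u *\<^sub>R v))\<^sup>2 / r) *
       (exp (- (1/2) * ((v - lam) \<bullet> (((2/r) *\<^sub>R P) *v (v - lam)))) / N)" for v
    unfolding F_def Cs_def normal_dens_def r2 S_def[symmetric] Sinv N_def d_def ..
  have Fnn: "F v \<ge> 0" for v using s Npos by (simp add: Fdef)
  have Fcont: "continuous_on UNIV F" unfolding Fdef[abs_def] using r Npos by (intro continuous_intros) auto
  have Fmeas[measurable]: "F \<in> borel_measurable borel"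
    using Fcont by (rule borel_measurable_continuous_onI)
  define B' where "B' = (1/r) *\<^sub>R B"
  have symB': "transpose B' = B'" using symB by (simp add: B'_def transpose_def vec_eq_iff)
  have pdB': "x \<bullet> (B' *v x) > 0" if "x \<noteq> 0" for x
    using pdB[OF that] r by (simp add: B'_def scaleR_matrix_vector_assoc[symmetric])
  obtain M3 where "det B' > 0" using congr_diag[OF symB' pdB'] by blast
  then have dB'pos: "det B' > 0" .
  define C0 where "C0 = \<sigma>2 * exp (- K / r) / N"
  have C0nn: "C0 \<ge> 0" using s Npos by (simp add: C0_def)
  have Fshift: "F (lam + c + z) = C0 * exp (- (z \<bullet> (B' *v z)))" for z
  proof -
    have e1: "h - u *\<^sub>R (lam + c + z) = m - u *\<^sub>R (c + z)" by (simp add: m_def algebra_simps)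
    have e2: "lam + c + z - lam = c + z" by simp
    have e3: "(c + z) \<bullet> (((2/r) *\<^sub>R P) *v (c + z)) = (2/r) * ((c + z) \<bullet> (P *v (c + z)))"
      by (simp add: scaleR_matrix_vector_assoc[symmetric])
    have cs: "(norm (m - u *\<^sub>R (c + z)))\<^sup>2 + (c + z) \<bullet> (P *v (c + z)) = z \<bullet> (B *v z) + K"
      unfolding K_def B_def by (rule complete_square[OF symP _ c_def]) (simp add: BBi[unfolded B_def])
    have "F (lam + c + z) = \<sigma>2 / N * exp (- ((norm (m - u *\<^sub>R (c + z)))\<^sup>2 + (c + z) \<bullet> (P *v (c + z))) / r)"
      unfolding Fdef e1 e2 e3 using r by (simp add: exp_add[symmetric] field_simps)
    also have "\<dots> = C0 * exp (- (z \<bullet> (B' *v z)))"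
      unfolding cs C0_def using r
      by (simp add: B'_def scaleR_matrix_vector_assoc[symmetric] exp_add[symmetric] field_simps)
    finally show ?thesis .
  qed
  have "(\<integral>\<^sup>+v. ennreal (F v) \<partial>lborel) = (\<integral>\<^sup>+z. ennreal (F ((lam + c) + z)) \<partial>lborel)"
    by (rule nn_integral_translate) measurable
  also have "\<dots> = (\<integral>\<^sup>+z. ennreal C0 * ennreal (exp (- (z \<bullet> (B' *v z)))) \<partial>lborel)"
    using C0nn by (intro nn_integral_cong) (simp add: Fshift ennreal_mult)
  also have "\<dots> = ennreal C0 * ennreal (sqrt (pi ^ CARD('n) / det B'))"
    by (subst nn_integral_cmult)
       (auto simp: gauss_nn[OF symB' pdB'] intro!: borel_measurable_continuous_onI continuous_intros)
  finally have nn: "(\<integral>\<^sup>+v. ennreal (F v) \<partial>lborel) = ennreal (C0 * sqrt (pi ^ CARD('n) / det B'))"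
    using C0nn dB'pos by (simp add: ennreal_mult)
  have "Clag \<sigma>2 lam Lam h u (sqrt r) = (LINT v|lborel. F v)"
    by (simp add: Clag_def F_def)
  also have "\<dots> = C0 * sqrt (pi ^ CARD('n) / det B')"
    using Fnn C0nn dB'pos by (subst integral_eq_nn_integral) (auto simp: nn)
  also have "\<dots> = \<sigma>2 * det (mat 1 + u\<^sup>2 *\<^sub>R Lam) powr (- 1 / 2) * exp (- K / r)"
  proof -
    have dB': "det B' = (1/r)^d * det B" by (simp add: B'_def det_scaleR_mat d_def)
    have "sqrt (pi ^ d / det B') / N = 1 / sqrt (det Lam * det B)"
      using r dLpos dBpos unfolding dB' N
      by (simp add: real_sqrt_mult real_sqrt_divide power_mult_distrib field_simps power_divide)
    moreover have "det (mat 1 + u\<^sup>2 *\<^sub>R Lam) powr (- 1 / 2) = 1 / sqrt (det Lam * det B)"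
      unfolding detLB[symmetric] using dLpos dBpos
      by (simp add: powr_minus_divide powr_half_sqrt[symmetric])
    moreover have "C0 * sqrt (pi ^ d / det B') = \<sigma>2 * exp (- K / r) * (sqrt (pi ^ d / det B') / N)"
      by (simp add: C0_def)
    ultimately show ?thesis by (simp add: d_def)
  qed
  finally show ?thesis by (simp add: Keq m_def)
qed

lemma NN_subst:
  fixes \<nu> p q :: real assumes nu: "\<nu> > 0" and p: "p > 0"
  shows "(\<integral>\<^sup>+r. ennreal (gamma_dens \<nu> (1 / (4 * p)) r * exp (- q / r)) * indicator {0<..} r \<partial>lborel)
       = (\<integral>\<^sup>+y. ennreal (y powr (\<nu> - 1) * exp (- y) / Gamma \<nu> * exp (- q / (4 * p * y))) * indicator {0<..} y \<partial>lborel)"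
proof -
  let ?f = "\<lambda>r. ennreal (gamma_dens \<nu> (1 / (4 * p)) r * exp (- q / r)) * indicator {0<..} r"
  have fm: "?f \<in> borel_measurable borel" unfolding gamma_dens_def by measurable
  have "(\<integral>\<^sup>+r. ?f r \<partial>lborel) = ennreal \<bar>4 * p\<bar> * (\<integral>\<^sup>+y. ?f (0 + (4 * p) * y) \<partial>lborel)"
    using p by (intro nn_integral_real_affine[OF fm]) auto
  also have "\<dots> = (\<integral>\<^sup>+y. ennreal (4 * p) * ?f (0 + (4 * p) * y) \<partial>lborel)"
  proof -
    have "(\<lambda>y. ?f (0 + (4 * p) * y)) \<in> borel_measurable borel"
      by (rule measurable_compose[OF _ fm]) measurable
    then show ?thesis using p by (subst nn_integral_cmult) auto
  qed
  also have "\<dots> = (\<integral>\<^sup>+y. ennreal (y powr (\<nu> - 1) * exp (- y) / Gamma \<nu> * exp (- q / (4 * p * y))) * indicator {0<..} y \<partial>lborel)"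
  proof (intro nn_integral_cong)
    fix y :: real
    show "ennreal (4 * p) * ?f (0 + (4 * p) * y) = ennreal (y powr (\<nu> - 1) * exp (- y) / Gamma \<nu> * exp (- q / (4 * p * y))) * indicator {0<..} y"
    proof (cases "y > 0")
      case False
      then have "\<not> (0 < 4 * p * y)" using p by (simp add: zero_less_mult_iff)
      then show ?thesis using False by (simp add: indicator_def)
    next
      case True
      define P where "P = 4 * p"
      have P: "P > 0" using p by (simp add: P_def)
      have a: "(P * y) powr (\<nu> - 1) = P powr (\<nu> - 1) * y powr (\<nu> - 1)" using P True by (simp add: powr_mult)
      have b: "(1 / P) powr \<nu> = 1 / P powr \<nu>" using P by (simp add: powr_divide)
      have c: "P * P powr (\<nu> - 1) = P powr \<nu>" using P by (simp add: powr_diff)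
      have d: "1 / P * (P * y) = y" using P by simp
      have "P * ((1 / P) powr \<nu> / Gamma \<nu> * (P * y) powr (\<nu> - 1) * exp (- (1 / P) * (P * y)))
          = y powr (\<nu> - 1) * exp (- y) / Gamma \<nu>"
      proof -
        have G: "Gamma \<nu> > 0" using nu by (simp add: Gamma_real_pos)
        have Pq: "P powr (\<nu> - 1) > 0" using P by simp
        show ?thesis unfolding a b d c[symmetric] using P G Pq by (simp add: field_simps)
      qed
      then have key: "P * (gamma_dens \<nu> (1 / P) (P * y) * exp (- q / (P * y))) = y powr (\<nu> - 1) * exp (- y) / Gamma \<nu> * exp (- q / (P * y))"
        using True P by (simp add: gamma_dens_def)
      have gnn: "gamma_dens \<nu> (1 / P) (P * y) * exp (- q / (P * y)) \<ge> 0"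
        using P True nu by (simp add: gamma_dens_def Gamma_real_pos)
      have "ennreal P * ennreal (gamma_dens \<nu> (1 / P) (P * y) * exp (- q / (P * y)))
          = ennreal (y powr (\<nu> - 1) * exp (- y) / Gamma \<nu> * exp (- q / (P * y)))"
        using gnn P key by (simp add: ennreal_mult[symmetric])
      moreover have "indicator {0<..} (0 + P * y) = (1::ennreal)" "indicator {0<..} y = (1::ennreal)"
        using P True by auto
      ultimately show ?thesis unfolding P_def by simp
    qed
  qed
  finally show ?thesis .
qed

lemma IG_inner:
  fixes \<alpha> \<beta> q y :: real
  assumes al: "\<alpha> > 0" and be: "\<beta> > 0" and q: "q \<ge> 0" and y: "y > 0"
  shows "(\<integral>\<^sup>+p. ennreal (invgamma_dens \<alpha> (\<beta>\<^sup>2 / 4) p * exp (- q / (4 * p * y))) * indicator {0<..} p \<partial>lborel)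
       = ennreal ((y / (y + q / \<beta>\<^sup>2)) powr \<alpha>)"
proof -
  define b where "b = \<beta>\<^sup>2 / 4"
  define c where "c = b + q / (4 * y)"
  have b: "b > 0" using be by (simp add: b_def)
  have c: "c > 0" using b q y by (simp add: c_def add_pos_nonneg)
  have G: "Gamma \<alpha> > 0" using al by (simp add: Gamma_real_pos)
  have "(\<integral>\<^sup>+p. ennreal (invgamma_dens \<alpha> (\<beta>\<^sup>2 / 4) p * exp (- q / (4 * p * y))) * indicator {0<..} p \<partial>lborel)
      = (\<integral>\<^sup>+p. ennreal (b powr \<alpha> / Gamma \<alpha>) * (ennreal (p powr (- \<alpha> - 1) * exp (- (c / p))) * indicator {0<..} p) \<partial>lborel)"
  proof (intro nn_integral_cong)
    fix p :: real
    show "ennreal (invgamma_dens \<alpha> (\<beta>\<^sup>2 / 4) p * exp (- q / (4 * p * y))) * indicator {0<..} p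
        = ennreal (b powr \<alpha> / Gamma \<alpha>) * (ennreal (p powr (- \<alpha> - 1) * exp (- (c / p))) * indicator {0<..} p)"
    proof (cases "p > 0")
      case True
      have e: "exp (- b / p) * exp (- q / (4 * p * y)) = exp (- (c / p))"
        using True y by (simp add: c_def exp_add[symmetric] field_simps)
      have "invgamma_dens \<alpha> (\<beta>\<^sup>2 / 4) p * exp (- q / (4 * p * y)) = (b powr \<alpha> / Gamma \<alpha>) * (p powr (- \<alpha> - 1) * exp (- (c / p)))"
        using True e[symmetric] by (simp add: invgamma_dens_def b_def[symmetric] mult_ac)
      then show ?thesis using True G b by (simp add: ennreal_mult[symmetric])
    qed simp
  qed
  also have "\<dots> = ennreal (b powr \<alpha> / Gamma \<alpha>) * ennreal (Gamma \<alpha> / c powr \<alpha>)"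
    by (subst nn_integral_cmult) (auto simp: invgamma_nn[OF al c])
  also have "\<dots> = ennreal ((b / c) powr \<alpha>)"
    using G b c by (simp add: ennreal_mult[symmetric] powr_divide)
  also have "b / c = y / (y + q / \<beta>\<^sup>2)"
    using be y by (simp add: b_def c_def field_simps)
  finally show ?thesis .
qed

lemma J_eq:
  fixes \<nu> \<alpha> \<beta> q :: real
  assumes nu: "\<nu> > 0" and al: "\<alpha> > 0" and be: "\<beta> > 0" and q: "q \<ge> 0"
  shows "(\<integral>\<^sup>+p. ennreal (invgamma_dens \<alpha> (\<beta>\<^sup>2 / 4) p) *
            (\<integral>\<^sup>+r. ennreal (gamma_dens \<nu> (1 / (4 * p)) r * exp (- q / r)) * indicator {0<..} r \<partial>lborel)
            * indicator {0<..} p \<partial>lborel)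
       = (\<integral>\<^sup>+y. ennreal (y powr (\<nu> - 1) * exp (- y) / Gamma \<nu> * (y / (y + q / \<beta>\<^sup>2)) powr \<alpha>) * indicator {0<..} y \<partial>lborel)"
proof -
  define H where "H p y = ennreal (invgamma_dens \<alpha> (\<beta>\<^sup>2 / 4) p) * indicator {0<..} p *
      (ennreal (y powr (\<nu> - 1) * exp (- y) / Gamma \<nu> * exp (- q / (4 * p * y))) * indicator {0<..} y)" for p y :: real
  have Hm: "case_prod H \<in> borel_measurable (lborel \<Otimes>\<^sub>M lborel)"
    unfolding H_def invgamma_dens_def case_prod_beta by measurable
  have "(\<integral>\<^sup>+p. ennreal (invgamma_dens \<alpha> (\<beta>\<^sup>2 / 4) p) *
            (\<integral>\<^sup>+r. ennreal (gamma_dens \<nu> (1 / (4 * p)) r * exp (- q / r)) * indicator {0<..} r \<partial>lborel)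
            * indicator {0<..} p \<partial>lborel)
      = (\<integral>\<^sup>+p. (\<integral>\<^sup>+y. H p y \<partial>lborel) \<partial>lborel)"
  proof (intro nn_integral_cong)
    fix p :: real
    show "ennreal (invgamma_dens \<alpha> (\<beta>\<^sup>2 / 4) p) *
            (\<integral>\<^sup>+r. ennreal (gamma_dens \<nu> (1 / (4 * p)) r * exp (- q / r)) * indicator {0<..} r \<partial>lborel)
            * indicator {0<..} p = (\<integral>\<^sup>+y. H p y \<partial>lborel)"
    proof (cases "p > 0")
      case True
      have m: "(\<lambda>y. ennreal (y powr (\<nu> - 1) * exp (- y) / Gamma \<nu> * exp (- q / (4 * p * y))) * indicator {0<..} y) \<in> borel_measurable lborel"
        by measurable
      show ?thesis unfolding H_def NN_subst[OF nu True]
        by (subst nn_integral_cmult[OF m]) (simp add: True mult_ac)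
    qed (simp add: H_def)
  qed
  also have "\<dots> = (\<integral>\<^sup>+y. (\<integral>\<^sup>+p. H p y \<partial>lborel) \<partial>lborel)"
    by (rule lborel_pair.Fubini'[OF Hm, symmetric])
  also have "\<dots> = (\<integral>\<^sup>+y. ennreal (y powr (\<nu> - 1) * exp (- y) / Gamma \<nu> * (y / (y + q / \<beta>\<^sup>2)) powr \<alpha>) * indicator {0<..} y \<partial>lborel)"
  proof (intro nn_integral_cong)
    fix y :: real
    show "(\<integral>\<^sup>+p. H p y \<partial>lborel) = ennreal (y powr (\<nu> - 1) * exp (- y) / Gamma \<nu> * (y / (y + q / \<beta>\<^sup>2)) powr \<alpha>) * indicator {0<..} y"
    proof (cases "y > 0")
      case True
      have G: "Gamma \<nu> > 0" using nu by (simp add: Gamma_real_pos)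
      have "(\<integral>\<^sup>+p. H p y \<partial>lborel) = (\<integral>\<^sup>+p. ennreal (y powr (\<nu> - 1) * exp (- y) / Gamma \<nu>) *
              (ennreal (invgamma_dens \<alpha> (\<beta>\<^sup>2 / 4) p * exp (- q / (4 * p * y))) * indicator {0<..} p) \<partial>lborel)"
      proof (intro nn_integral_cong)
        fix p :: real
        have inn: "invgamma_dens \<alpha> (\<beta>\<^sup>2 / 4) p \<ge> 0" using al by (simp add: invgamma_dens_def Gamma_real_pos)
        show "H p y = ennreal (y powr (\<nu> - 1) * exp (- y) / Gamma \<nu>) *
              (ennreal (invgamma_dens \<alpha> (\<beta>\<^sup>2 / 4) p * exp (- q / (4 * p * y))) * indicator {0<..} p)"
          using True G inn by (simp add: H_def ennreal_mult[symmetric] mult_ac)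
      qed
      also have "\<dots> = ennreal (y powr (\<nu> - 1) * exp (- y) / Gamma \<nu>) * ennreal ((y / (y + q / \<beta>\<^sup>2)) powr \<alpha>)"
      proof -
        have m: "(\<lambda>p. ennreal (invgamma_dens \<alpha> (\<beta>\<^sup>2 / 4) p * exp (- q / (4 * p * y))) * indicator {0<..} p) \<in> borel_measurable lborel"
          unfolding invgamma_dens_def by measurable
        show ?thesis by (subst nn_integral_cmult[OF m]) (simp_all only: IG_inner[OF al be q True])
      qed
      finally show ?thesis using True G by (simp add: ennreal_mult[symmetric])
    qed (simp add: H_def)
  qed
  finally show ?thesis .
qed

lemma hyp_W:
  fixes \<nu> \<alpha> s :: real
  assumes nu: "\<nu> > 0" and al: "\<alpha> > 0" and s: "s \<ge> 0"
  shows "ennreal (Gamma (\<nu> + \<alpha>) / (Gamma \<nu> * Gamma \<alpha>)) *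
      (\<integral>\<^sup>+t. ennreal (t powr (\<alpha> - 1) * (1 + t) powr (1 - \<nu> - \<alpha> - 1) * exp (- s * t)) * indicator {0<..} t \<partial>lborel)
    = (\<integral>\<^sup>+y. ennreal (y powr (\<nu> - 1) * exp (- y) / Gamma \<nu> * (y / (y + s)) powr \<alpha>) * indicator {0<..} y \<partial>lborel)"
proof -
  have na: "\<nu> + \<alpha> > 0" using nu al by simp
  have Gna: "Gamma (\<nu> + \<alpha>) > 0" using na by (simp add: Gamma_real_pos)
  have Gn: "Gamma \<nu> > 0" using nu by (simp add: Gamma_real_pos)
  have Ga: "Gamma \<alpha> > 0" using al by (simp add: Gamma_real_pos)
  define H where "H t y = ennreal (t powr (\<alpha> - 1) * exp (- (s * t)) / Gamma (\<nu> + \<alpha>)) * indicator {0<..} t *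
      (ennreal (y powr (\<nu> + \<alpha> - 1) * exp (- ((1 + t) * y))) * indicator {0<..} y)" for t y :: real
  have Hm: "case_prod H \<in> borel_measurable (lborel \<Otimes>\<^sub>M lborel)"
    unfolding H_def case_prod_beta by measurable
  have "(\<integral>\<^sup>+t. ennreal (t powr (\<alpha> - 1) * (1 + t) powr (1 - \<nu> - \<alpha> - 1) * exp (- s * t)) * indicator {0<..} t \<partial>lborel)
      = (\<integral>\<^sup>+t. (\<integral>\<^sup>+y. H t y \<partial>lborel) \<partial>lborel)"
  proof (intro nn_integral_cong)
    fix t :: real
    show "ennreal (t powr (\<alpha> - 1) * (1 + t) powr (1 - \<nu> - \<alpha> - 1) * exp (- s * t)) * indicator {0<..} t = (\<integral>\<^sup>+y. H t y \<partial>lborel)"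
    proof (cases "t > 0")
      case True
      have t1: "1 + t > 0" using True by simp
      have m: "(\<lambda>y. ennreal (y powr (\<nu> + \<alpha> - 1) * exp (- ((1 + t) * y))) * indicator {0<..} y) \<in> borel_measurable lborel"
        by measurable
      have "(\<integral>\<^sup>+y. H t y \<partial>lborel) = ennreal (t powr (\<alpha> - 1) * exp (- (s * t)) / Gamma (\<nu> + \<alpha>)) *
              ennreal (Gamma (\<nu> + \<alpha>) / (1 + t) powr (\<nu> + \<alpha>))"
        unfolding H_def using True by (subst nn_integral_cmult[OF m]) (simp add: gamma_nn[OF na t1])
      also have "\<dots> = ennreal (t powr (\<alpha> - 1) * (1 + t) powr (1 - \<nu> - \<alpha> - 1) * exp (- s * t))"
      proof -
        have "(1 + t) powr (1 - \<nu> - \<alpha> - 1) = 1 / (1 + t) powr (\<nu> + \<alpha>)"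
          using t1 by (simp add: powr_minus_divide[symmetric])
        then show ?thesis using Gna t1 True by (simp add: ennreal_mult[symmetric])
      qed
      finally show ?thesis using True by simp
    qed (simp add: H_def)
  qed
  also have "\<dots> = (\<integral>\<^sup>+y. (\<integral>\<^sup>+t. H t y \<partial>lborel) \<partial>lborel)"
    by (rule lborel_pair.Fubini'[OF Hm, symmetric])
  also have "\<dots> = (\<integral>\<^sup>+y. ennreal (y powr (\<nu> + \<alpha> - 1) * exp (- y) / Gamma (\<nu> + \<alpha>) * (Gamma \<alpha> / (y + s) powr \<alpha>)) * indicator {0<..} y \<partial>lborel)"
  proof (intro nn_integral_cong)
    fix y :: real
    show "(\<integral>\<^sup>+t. H t y \<partial>lborel) = ennreal (y powr (\<nu> + \<alpha> - 1) * exp (- y) / Gamma (\<nu> + \<alpha>) * (Gamma \<alpha> / (y + s) powr \<alpha>)) * indicator {0<..} y"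
    proof (cases "y > 0")
      case True
      have ys: "y + s > 0" using True s by simp
      have "(\<integral>\<^sup>+t. H t y \<partial>lborel) = (\<integral>\<^sup>+t. ennreal (y powr (\<nu> + \<alpha> - 1) * exp (- y) / Gamma (\<nu> + \<alpha>)) *
               (ennreal (t powr (\<alpha> - 1) * exp (- ((y + s) * t))) * indicator {0<..} t) \<partial>lborel)"
      proof (intro nn_integral_cong)
        fix t :: real
        have e: "exp (- (s * t)) * exp (- ((1 + t) * y)) = exp (- y) * exp (- ((y + s) * t))"
          by (simp add: exp_add[symmetric] algebra_simps)
        have "t powr (\<alpha> - 1) * exp (- (s * t)) / Gamma (\<nu> + \<alpha>) * (y powr (\<nu> + \<alpha> - 1) * exp (- ((1 + t) * y)))
            = y powr (\<nu> + \<alpha> - 1) * exp (- y) / Gamma (\<nu> + \<alpha>) * (t powr (\<alpha> - 1) * exp (- ((y + s) * t)))"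
          using e by (simp add: field_simps)
        then show "H t y = ennreal (y powr (\<nu> + \<alpha> - 1) * exp (- y) / Gamma (\<nu> + \<alpha>)) *
               (ennreal (t powr (\<alpha> - 1) * exp (- ((y + s) * t))) * indicator {0<..} t)"
          using True Gna e by (simp add: H_def ennreal_mult[symmetric] mult_ac indicator_def)
      qed
      also have "\<dots> = ennreal (y powr (\<nu> + \<alpha> - 1) * exp (- y) / Gamma (\<nu> + \<alpha>)) * ennreal (Gamma \<alpha> / (y + s) powr \<alpha>)"
      proof -
        have m: "(\<lambda>t. ennreal (t powr (\<alpha> - 1) * exp (- ((y + s) * t))) * indicator {0<..} t) \<in> borel_measurable lborel"
          by measurable
        show ?thesis by (subst nn_integral_cmult[OF m]) (simp_all only: gamma_nn[OF al ys])
      qed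
      finally show ?thesis using True Gna Ga ys by (simp add: ennreal_mult[symmetric])
    qed (simp add: H_def)
  qed
  finally have I: "(\<integral>\<^sup>+t. ennreal (t powr (\<alpha> - 1) * (1 + t) powr (1 - \<nu> - \<alpha> - 1) * exp (- s * t)) * indicator {0<..} t \<partial>lborel)
     = (\<integral>\<^sup>+y. ennreal (y powr (\<nu> + \<alpha> - 1) * exp (- y) / Gamma (\<nu> + \<alpha>) * (Gamma \<alpha> / (y + s) powr \<alpha>)) * indicator {0<..} y \<partial>lborel)" .
  have m2: "(\<lambda>y. ennreal (y powr (\<nu> + \<alpha> - 1) * exp (- y) / Gamma (\<nu> + \<alpha>) * (Gamma \<alpha> / (y + s) powr \<alpha>)) * indicator {0<..} y) \<in> borel_measurable lborel"
    by measurable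
  show ?thesis
    unfolding I
  proof (subst nn_integral_cmult[OF m2, symmetric], intro nn_integral_cong)
    fix y :: real
    show "ennreal (Gamma (\<nu> + \<alpha>) / (Gamma \<nu> * Gamma \<alpha>)) * (ennreal (y powr (\<nu> + \<alpha> - 1) * exp (- y) / Gamma (\<nu> + \<alpha>) * (Gamma \<alpha> / (y + s) powr \<alpha>)) * indicator {0<..} y)
       = ennreal (y powr (\<nu> - 1) * exp (- y) / Gamma \<nu> * (y / (y + s)) powr \<alpha>) * indicator {0<..} y"
    proof (cases "y > 0")
      case True
      have ys: "y + s > 0" using True s by simp
      have "y powr (\<nu> + \<alpha> - 1) = y powr (\<nu> - 1) * y powr \<alpha>"
        by (simp add: powr_add[symmetric] algebra_simps)
      moreover have "(y / (y + s)) powr \<alpha> = y powr \<alpha> / (y + s) powr \<alpha>"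
        using True ys by (simp add: powr_divide)
      ultimately have "Gamma (\<nu> + \<alpha>) / (Gamma \<nu> * Gamma \<alpha>) * (y powr (\<nu> + \<alpha> - 1) * exp (- y) / Gamma (\<nu> + \<alpha>) * (Gamma \<alpha> / (y + s) powr \<alpha>))
          = y powr (\<nu> - 1) * exp (- y) / Gamma \<nu> * (y / (y + s)) powr \<alpha>"
        using Gna Gn Ga ys by (simp add: field_simps)
      then show ?thesis using True Gna Gn Ga ys by (simp add: ennreal_mult[symmetric])
    qed simp
  qed
qed


lemma set_lint_nn:
  fixes f :: "real \<Rightarrow> real"
  assumes [measurable]: "f \<in> borel_measurable borel" and A[measurable]: "A \<in> sets borel"
    and nn: "\<And>x. x \<in> A \<Longrightarrow> 0 \<le> f x"
  shows "(LINT x:A|lborel. f x) = enn2real (\<integral>\<^sup>+x. ennreal (f x) * indicator A x \<partial>lborel)"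
proof -
  have "(LINT x:A|lborel. f x) = enn2real (\<integral>\<^sup>+x. ennreal (indicator A x *\<^sub>R f x) \<partial>lborel)"
    unfolding set_lebesgue_integral_def using nn
    by (intro integral_eq_nn_integral) (auto simp: indicator_def)
  also have "(\<integral>\<^sup>+x. ennreal (indicator A x *\<^sub>R f x) \<partial>lborel) = (\<integral>\<^sup>+x. ennreal (f x) * indicator A x \<partial>lborel)"
    by (intro nn_integral_cong) (auto simp: indicator_def)
  finally show ?thesis .
qed

lemma W0:
  fixes \<nu> \<alpha> :: real assumes nu: "\<nu> > 0"
  shows "(\<integral>\<^sup>+y. ennreal (y powr (\<nu> - 1) * exp (- y) / Gamma \<nu> * (y / (y + 0)) powr \<alpha>) * indicator {0<..} y \<partial>lborel) = 1"
proof -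
  have Gn: "Gamma \<nu> > 0" using nu by (simp add: Gamma_real_pos)
  have "(\<integral>\<^sup>+y. ennreal (y powr (\<nu> - 1) * exp (- y) / Gamma \<nu> * (y / (y + 0)) powr \<alpha>) * indicator {0<..} y \<partial>lborel)
      = (\<integral>\<^sup>+y. ennreal (1 / Gamma \<nu>) * (ennreal (y powr (\<nu> - 1) * exp (- (1 * y))) * indicator {0<..} y) \<partial>lborel)"
    using Gn by (intro nn_integral_cong) (auto simp: indicator_def ennreal_mult[symmetric])
  also have "\<dots> = ennreal (1 / Gamma \<nu>) * ennreal (Gamma \<nu> / 1 powr \<nu>)"
  proof -
    have m: "(\<lambda>y. ennreal (y powr (\<nu> - 1) * exp (- (1 * y))) * indicator {0<..} y) \<in> borel_measurable lborel"
      by measurable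
    show ?thesis by (subst nn_integral_cmult[OF m]) (simp_all only: gamma_nn[OF nu zero_less_one])
  qed
  also have "\<dots> = 1" using Gn by (simp add: ennreal_mult[symmetric])
  finally show ?thesis .
qed


lemma q_nonneg:
  fixes Lam :: "real^'n::finite^'n" and m :: "real^'n" and u :: real
  assumes pdL: "\<And>x. x \<noteq> 0 \<Longrightarrow> x \<bullet> (Lam *v x) > 0"
  shows "m \<bullet> (matrix_inv (u\<^sup>2 *\<^sub>R Lam + mat 1) *v m) \<ge> 0"
proof -
  let ?A = "u\<^sup>2 *\<^sub>R Lam + mat 1"
  have xA: "x \<bullet> (?A *v x) = u\<^sup>2 * (x \<bullet> (Lam *v x)) + x \<bullet> x" for x
    by (simp add: matrix_vector_mult_add_rdistrib scaleR_matrix_vector_assoc[symmetric] inner_add_right)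
  have pdA: "x \<bullet> (?A *v x) > 0" if "x \<noteq> 0" for x
  proof -
    have "u\<^sup>2 * (x \<bullet> (Lam *v x)) \<ge> 0" using pdL[OF that] by simp
    moreover have "x \<bullet> x > 0" using that by simp
    ultimately show ?thesis unfolding xA by linarith
  qed
  have dA: "det ?A \<noteq> 0" using pd_det_nz pdA by blast
  define y where "y = matrix_inv ?A *v m"
  have my: "m = ?A *v y" using minv_props(1)[OF dA] by (simp add: y_def matrix_vector_mul_assoc)
  have "m \<bullet> (matrix_inv ?A *v m) = y \<bullet> (?A *v y)"
    by (simp add: y_def[symmetric]) (simp add: my inner_commute)
  also have "\<dots> \<ge> 0" using pdA[of y] by (cases "y = 0") auto
  finally show ?thesis .
qed

lemma NN_fin:
  fixes \<nu> p q :: real assumes nu: "\<nu> > 0" and p: "p > 0" and q: "q \<ge> 0"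
  shows "(\<integral>\<^sup>+r. ennreal (gamma_dens \<nu> (1 / (4 * p)) r * exp (- q / r)) * indicator {0<..} r \<partial>lborel) \<le> 1"
proof -
  have "(\<integral>\<^sup>+r. ennreal (gamma_dens \<nu> (1 / (4 * p)) r * exp (- q / r)) * indicator {0<..} r \<partial>lborel)
      = (\<integral>\<^sup>+y. ennreal (y powr (\<nu> - 1) * exp (- y) / Gamma \<nu> * exp (- q / (4 * p * y))) * indicator {0<..} y \<partial>lborel)"
    by (rule NN_subst[OF nu p])
  also have "\<dots> \<le> (\<integral>\<^sup>+y. ennreal (y powr (\<nu> - 1) * exp (- y) / Gamma \<nu> * (y / (y + 0)) powr (1::real)) * indicator {0<..} y \<partial>lborel)"
  proof (intro nn_integral_mono)
    fix y :: real
    show "ennreal (y powr (\<nu> - 1) * exp (- y) / Gamma \<nu> * exp (- q / (4 * p * y))) * indicator {0<..} y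
        \<le> ennreal (y powr (\<nu> - 1) * exp (- y) / Gamma \<nu> * (y / (y + 0)) powr (1::real)) * indicator {0<..} y"
    proof (cases "y > 0")
      case True
      have "exp (- q / (4 * p * y)) \<le> 1" using True p q by (simp add: divide_nonneg_pos)
      moreover have "y powr (\<nu> - 1) * exp (- y) / Gamma \<nu> \<ge> 0" using nu by (simp add: Gamma_real_pos)
      ultimately have "y powr (\<nu> - 1) * exp (- y) / Gamma \<nu> * exp (- q / (4 * p * y)) \<le> y powr (\<nu> - 1) * exp (- y) / Gamma \<nu> * 1"
        by (intro mult_left_mono) auto
      then show ?thesis using True by (simp add: ennreal_leI)
    qed simp
  qed
  also have "\<dots> = 1" by (rule W0[OF nu])
  finally show ?thesis .
qed

theorem proposition2:
  fixes \<sigma>2 \<nu> \<alpha> \<beta> :: real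
    and lam :: "real^'n" and Lam :: "real^'n^'n"
    and h :: "real^'n" and u :: real
  assumes "\<sigma>2 > 0" and "\<nu> > 0" and "\<alpha> > 0" and "\<beta> > 0"
    and "transpose Lam = Lam"
    and "\<forall>x::real^'n. x \<noteq> 0 \<longrightarrow> x \<bullet> (Lam *v x) > 0"
  shows "Kmix \<sigma>2 \<nu> \<alpha> \<beta> lam Lam h u =
    \<sigma>2 * (det (mat 1 + u\<^sup>2 *\<^sub>R Lam)) powr (- 1 / 2) *
    CH (sqrt ((h - u *\<^sub>R lam) \<bullet> (matrix_inv (u\<^sup>2 *\<^sub>R Lam + mat 1) *v (h - u *\<^sub>R lam)))) \<nu> \<alpha> \<beta>"
proof -
  note sig = assms(1) and nu = assms(2) and al = assms(3) and be = assms(4) and symL = assms(5)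
  have pdL: "\<And>x. x \<noteq> 0 \<Longrightarrow> x \<bullet> (Lam *v x) > 0" using assms(6) by blast
  define m where "m = h - u *\<^sub>R lam"
  define q where "q = m \<bullet> (matrix_inv (u\<^sup>2 *\<^sub>R Lam + mat 1) *v m)"
  define K0 where "K0 = \<sigma>2 * (det (mat 1 + u\<^sup>2 *\<^sub>R Lam)) powr (- 1 / 2)"
  have K0nn: "K0 \<ge> 0" using sig by (simp add: K0_def)
  have qnn: "q \<ge> 0" unfolding q_def by (rule q_nonneg[OF pdL])
  have Cl: "Clag \<sigma>2 lam Lam h u (sqrt r) = K0 * exp (- q / r)" if "r > 0" for r
    using Clag_closed[OF symL pdL that, of \<sigma>2 lam h u] sig by (simp add: K0_def q_def m_def)
  define NN where "NN p = (\<integral>\<^sup>+r. ennreal (gamma_dens \<nu> (1 / (4 * p)) r * exp (- q / r)) * indicator {0<..} r \<partial>lborel)" for p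
  have NNm[measurable]: "NN \<in> borel_measurable borel"
    unfolding NN_def[abs_def] gamma_dens_def by measurable
  have inner: "(LINT r:{0<..}|lborel. gamma_dens \<nu> (1 / (4 * p)) r * Clag \<sigma>2 lam Lam h u (sqrt r)) = K0 * enn2real (NN p)"
    if p: "p > 0" for p
  proof -
    have "(LINT r:{0<..}|lborel. gamma_dens \<nu> (1 / (4 * p)) r * Clag \<sigma>2 lam Lam h u (sqrt r))
        = (LINT r:{0<..}|lborel. K0 * (gamma_dens \<nu> (1 / (4 * p)) r * exp (- q / r)))"
      by (intro set_lebesgue_integral_cong) (auto simp: Cl)
    also have "\<dots> = enn2real (\<integral>\<^sup>+r. ennreal (K0 * (gamma_dens \<nu> (1 / (4 * p)) r * exp (- q / r))) * indicator {0<..} r \<partial>lborel)"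
      using K0nn nu by (intro set_lint_nn) (auto simp: gamma_dens_def Gamma_real_pos)
    also have "(\<integral>\<^sup>+r. ennreal (K0 * (gamma_dens \<nu> (1 / (4 * p)) r * exp (- q / r))) * indicator {0<..} r \<partial>lborel)
        = ennreal K0 * NN p"
    proof -
      have m: "(\<lambda>r. ennreal (gamma_dens \<nu> (1 / (4 * p)) r * exp (- q / r)) * indicator {0<..} r) \<in> borel_measurable lborel"
        unfolding gamma_dens_def by measurable
      have "(\<integral>\<^sup>+r. ennreal (K0 * (gamma_dens \<nu> (1 / (4 * p)) r * exp (- q / r))) * indicator {0<..} r \<partial>lborel)
          = (\<integral>\<^sup>+r. ennreal K0 * (ennreal (gamma_dens \<nu> (1 / (4 * p)) r * exp (- q / r)) * indicator {0<..} r) \<partial>lborel)"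
        using K0nn nu p by (intro nn_integral_cong) (auto simp: ennreal_mult gamma_dens_def Gamma_real_pos mult_ac)
      also have "\<dots> = ennreal K0 * NN p" by (subst nn_integral_cmult[OF m]) (simp_all add: NN_def)
      finally show ?thesis .
    qed
    finally show ?thesis using K0nn by (simp add: enn2real_mult)
  qed
  have NNfin: "NN p \<le> 1" if "p > 0" for p
    unfolding NN_def by (rule NN_fin[OF nu that qnn])
  define IG where "IG p = invgamma_dens \<alpha> (\<beta>\<^sup>2 / 4) p" for p
  have IGnn: "IG p \<ge> 0" for p using al by (simp add: IG_def invgamma_dens_def Gamma_real_pos)
  have "Kmix \<sigma>2 \<nu> \<alpha> \<beta> lam Lam h u = (LINT p:{0<..}|lborel. IG p * (K0 * enn2real (NN p)))"
    unfolding Kmix_def IG_def by (intro set_lebesgue_integral_cong) (auto simp: inner)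
  also have "\<dots> = enn2real (\<integral>\<^sup>+p. ennreal (IG p * (K0 * enn2real (NN p))) * indicator {0<..} p \<partial>lborel)"
  proof -
    have mm: "(\<lambda>p. IG p * (K0 * enn2real (NN p))) \<in> borel_measurable borel"
      unfolding IG_def invgamma_dens_def by measurable
    show ?thesis by (rule set_lint_nn[OF mm]) (auto intro!: mult_nonneg_nonneg IGnn K0nn enn2real_nonneg)
  qed
  also have "(\<integral>\<^sup>+p. ennreal (IG p * (K0 * enn2real (NN p))) * indicator {0<..} p \<partial>lborel)
      = ennreal K0 * (\<integral>\<^sup>+p. ennreal (IG p) * NN p * indicator {0<..} p \<partial>lborel)"
  proof -
    have m: "(\<lambda>p. ennreal (IG p) * NN p * indicator {0<..} p) \<in> borel_measurable lborel"
      unfolding IG_def invgamma_dens_def by measurable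
    have "(\<integral>\<^sup>+p. ennreal (IG p * (K0 * enn2real (NN p))) * indicator {0<..} p \<partial>lborel)
        = (\<integral>\<^sup>+p. ennreal K0 * (ennreal (IG p) * NN p * indicator {0<..} p) \<partial>lborel)"
    proof (intro nn_integral_cong)
      fix p :: real
      show "ennreal (IG p * (K0 * enn2real (NN p))) * indicator {0<..} p = ennreal K0 * (ennreal (IG p) * NN p * indicator {0<..} p)"
      proof (cases "p > 0")
        case True
        have "NN p \<noteq> \<infinity>" using NNfin[OF True] by (auto simp: top_unique)
        then have "ennreal (enn2real (NN p)) = NN p" by (simp add: ennreal_enn2real_if)
        then show ?thesis using True IGnn[of p] K0nn by (simp add: ennreal_mult mult_ac)
      qed simp
    qed
    also have "\<dots> = ennreal K0 * (\<integral>\<^sup>+p. ennreal (IG p) * NN p * indicator {0<..} p \<partial>lborel)"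
      by (rule nn_integral_cmult[OF m])
    finally show ?thesis .
  qed
  also have "(\<integral>\<^sup>+p. ennreal (IG p) * NN p * indicator {0<..} p \<partial>lborel)
      = (\<integral>\<^sup>+y. ennreal (y powr (\<nu> - 1) * exp (- y) / Gamma \<nu> * (y / (y + q / \<beta>\<^sup>2)) powr \<alpha>) * indicator {0<..} y \<partial>lborel)"
    unfolding IG_def NN_def by (rule J_eq[OF nu al be qnn])
  finally have Keq: "Kmix \<sigma>2 \<nu> \<alpha> \<beta> lam Lam h u = K0 * enn2real
      (\<integral>\<^sup>+y. ennreal (y powr (\<nu> - 1) * exp (- y) / Gamma \<nu> * (y / (y + q / \<beta>\<^sup>2)) powr \<alpha>) * indicator {0<..} y \<partial>lborel)"
    using K0nn by (simp add: enn2real_mult)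
  have CHeq: "CH (sqrt q) \<nu> \<alpha> \<beta> = enn2real
      (\<integral>\<^sup>+y. ennreal (y powr (\<nu> - 1) * exp (- y) / Gamma \<nu> * (y / (y + q / \<beta>\<^sup>2)) powr \<alpha>) * indicator {0<..} y \<partial>lborel)"
  proof (cases "q = 0")
    case True
    then show ?thesis using W0[OF nu, of \<alpha>] by (simp add: CH_def)
  next
    case False
    then have qpos: "q > 0" using qnn by simp
    define s where "s = q / \<beta>\<^sup>2"
    have s: "s \<ge> 0" using qnn by (simp add: s_def)
    have Gn: "Gamma \<nu> > 0" using nu by (simp add: Gamma_real_pos)
    have Ga: "Gamma \<alpha> > 0" using al by (simp add: Gamma_real_pos)
    have Gna: "Gamma (\<nu> + \<alpha>) > 0" using nu al by (simp add: Gamma_real_pos)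
    have sq: "(sqrt q)\<^sup>2 / \<beta>\<^sup>2 = s" using qnn by (simp add: s_def)
    have "CH (sqrt q) \<nu> \<alpha> \<beta> = Gamma (\<nu> + \<alpha>) / Gamma \<nu> * (1 / Gamma \<alpha>) *
        (LINT t:{0<..}|lborel. t powr (\<alpha> - 1) * (1 + t) powr (1 - \<nu> - \<alpha> - 1) * exp (- s * t))"
      using qpos unfolding CH_def hypU_def sq by simp
    also have "(LINT t:{0<..}|lborel. t powr (\<alpha> - 1) * (1 + t) powr (1 - \<nu> - \<alpha> - 1) * exp (- s * t))
        = enn2real (\<integral>\<^sup>+t. ennreal (t powr (\<alpha> - 1) * (1 + t) powr (1 - \<nu> - \<alpha> - 1) * exp (- s * t)) * indicator {0<..} t \<partial>lborel)"
      by (intro set_lint_nn) auto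
    also have "Gamma (\<nu> + \<alpha>) / Gamma \<nu> * (1 / Gamma \<alpha>) * enn2real (\<integral>\<^sup>+t. ennreal (t powr (\<alpha> - 1) * (1 + t) powr (1 - \<nu> - \<alpha> - 1) * exp (- s * t)) * indicator {0<..} t \<partial>lborel)
        = enn2real (ennreal (Gamma (\<nu> + \<alpha>) / (Gamma \<nu> * Gamma \<alpha>)) * (\<integral>\<^sup>+t. ennreal (t powr (\<alpha> - 1) * (1 + t) powr (1 - \<nu> - \<alpha> - 1) * exp (- s * t)) * indicator {0<..} t \<partial>lborel))"
      using Gn Ga Gna by (simp add: enn2real_mult)
    also have "\<dots> = enn2real (\<integral>\<^sup>+y. ennreal (y powr (\<nu> - 1) * exp (- y) / Gamma \<nu> * (y / (y + s)) powr \<alpha>) * indicator {0<..} y \<partial>lborel)"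
      by (simp only: hyp_W[OF nu al s])
    finally show ?thesis by (simp add: s_def)
  qed
  show ?thesis
    unfolding Keq CHeq[symmetric] by (simp add: K0_def q_def m_def)
qed

end
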